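(* Let $\tilde U=[\tilde u_1,\dots,\tilde u_N]\in\mathbb R^{d\times N}$ be a normalized embedding, i.e. $\tilde K=\tilde U^\top\tilde U$ satisfies $\tilde K_{kk}=1$ for all $k\in[N]$. Let $C>0$ and $\mathcal H_{\tilde U}=\{w\mid w=\tilde U\beta,\ \beta\in\mathbb R^N,\ \|\beta\|_\infty\le C\}$. Then for $p\in(0,1/2]$, $$R(\mathcal H_{\tilde U},\tilde U,p)\le C\sqrt{2p\,\lambda_1(\tilde K)},$$ where $\lambda_1(\tilde K)$ is the largest eigenvalue of $\tilde K$.
   Context: Transductive Rademacher complexity: for a class $\mathcal H$ of vectors $h\in\mathbb R^d$ and $p\in(0,1/2]$, $R(\mathcal H,\tilde U,p)=\frac1N\mathbb E_\gamma\big[\sup_{h\in\mathcal H}\sum_{k=1}^N\gamma_k h^\top\tilde u_k\big]$, where $\gamma_1,\dots,\gamma_N$ are i.i.d. random variables taking values $+1,-1,0$ with probabilities $p,p,1-2p$. In the paper $\tilde U$ is an embedding of node pairs of a graph (columns indexed by pairs), but the statement only uses that the columns have unit norm. *)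

theory Defs
  imports "HOL-Analysis.Analysis"
begin

text \<open>Columns of U :: real^'n^'d are indexed by the finite type 'n (so N = CARD('n)),
  rows by the finite type 'd (so d = CARD('d)).\<close>

definition largest_eigenvalue :: "real^'n^'n \<Rightarrow> real" where
  "largest_eigenvalue A = Max {c. \<exists>v. v \<noteq> 0 \<and> A *v v = c *\<^sub>R v}"

definition gamma_prob :: "real \<Rightarrow> real \<Rightarrow> real" where
  "gamma_prob p g = (if g = 0 then 1 - 2 * p else p)"

text \<open>Transductive Rademacher complexity R(H, U, p): the expectation over the i.i.d.
  gamma in {-1,0,1}^N written out as a finite weighted sum.\<close>
definition trans_rademacher ::
  "(real^'d) set \<Rightarrow> real^'n^'d \<Rightarrow> real \<Rightarrow> real" where
  "trans_rademacher H U p =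
     (1 / real CARD('n)) *
     (\<Sum>\<gamma> \<in> PiE (UNIV :: 'n set) (\<lambda>_. {-1, 0, 1 :: real}).
         (\<Prod>k\<in>UNIV. gamma_prob p (\<gamma> k)) *
         (SUP h\<in>H. \<Sum>k\<in>UNIV. \<gamma> k * (h \<bullet> column k U)))"

definition H_class :: "real^'n^'d \<Rightarrow> real \<Rightarrow> (real^'d) set" where
  "H_class U C = {U *v \<beta> | \<beta>. \<forall>k. \<bar>\<beta> $ k\<bar> \<le> C}"

end

theory Submission
  imports Defs
begin

lemma dotK: "x \<bullet> ((transpose U ** U) *v y) = (U *v x) \<bullet> (U *v (y::real^'n))"
  for U :: "real^'n^'d"
proof -
  have "(transpose U ** U) *v y = transpose U *v (U *v y)"
    by (simp add: matrix_vector_mul_assoc)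
  then show ?thesis by (metis dot_lmul_matrix vector_transpose_matrix)
qed

lemma eig_finite:
  fixes U :: "real^'n^'d"
  shows "finite {c. \<exists>v. v \<noteq> 0 \<and> (transpose U ** U) *v v = c *\<^sub>R v}"
proof -
  define K where "K = transpose U ** U"
  define E where "E = {c. \<exists>v. v \<noteq> 0 \<and> K *v v = c *\<^sub>R v}"
  define f where "f c = (SOME v. v \<noteq> 0 \<and> K *v v = c *\<^sub>R v)" for c
  have fE: "f c \<noteq> 0 \<and> K *v f c = c *\<^sub>R f c" if "c \<in> E" for c
  proof -
    from that obtain v where "v \<noteq> 0 \<and> K *v v = c *\<^sub>R v" unfolding E_def by blast
    then show ?thesis unfolding f_def by (rule someI)
  qed
  have inj: "inj_on f E"
  proof (rule inj_onI)
    fix a b assume "a \<in> E" "b \<in> E" "f a = f b"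
    then have "a *\<^sub>R f a = b *\<^sub>R f a" "f a \<noteq> 0" using fE by metis+
    then show "a = b" by (metis scaleR_cancel_right)
  qed
  have orth: "f a \<bullet> f b = 0" if "a \<in> E" "b \<in> E" "a \<noteq> b" for a b
  proof -
    have "f a \<bullet> (K *v f b) = f b \<bullet> (K *v f a)"
      unfolding K_def dotK by (simp add: inner_commute)
    then have "b * (f a \<bullet> f b) = a * (f a \<bullet> f b)"
      using fE[OF that(1)] fE[OF that(2)] by (simp add: inner_commute)
    then show ?thesis using that(3) by simp
  qed
  have "pairwise orthogonal (f ` E)"
    unfolding pairwise_def orthogonal_def using orth inj by (auto simp: inj_on_def) 
  moreover have "0 \<notin> f ` E" using fE by auto
  ultimately have "independent (f ` E)" by (rule pairwise_orthogonal_independent)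
  then have "finite (f ` E)" using independent_bound by blast
  then have "finite E" using inj finite_imageD by blast
  then show ?thesis unfolding E_def K_def .
qed

lemma quad_zero:
  fixes a b :: real
  assumes "a \<ge> 0" and h: "\<And>t. t > 0 \<Longrightarrow> 2 * t * a + t\<^sup>2 * b \<le> 0"
  shows "a = 0"
proof (rule ccontr)
  assume "a \<noteq> 0" then have a: "a > 0" using assms(1) by simp
  define t where "t = a / (\<bar>b\<bar> + 1)"
  have t: "t > 0" using a by (simp add: t_def)
  have "2 * t * a + t\<^sup>2 * b \<le> 0" using h t by simp
  then have "t * (2 * a + t * b) \<le> 0" by (simp add: power2_eq_square algebra_simps)
  then have "2 * a + t * b \<le> 0" using t by (simp add: mult_le_0_iff)
  moreover have "t * \<bar>b\<bar> < a" using a unfolding t_def by (simp add: field_simps)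
  moreover have "- (t * b) \<le> t * \<bar>b\<bar>" using t by (metis abs_ge_minus_self mult_left_mono mult_minus_right less_imp_le)
  ultimately show False using a by linarith
qed

lemma top_eig:
  fixes U :: "real^'n^'d"
  shows "\<exists>\<mu> x0. x0 \<noteq> 0 \<and> (transpose U ** U) *v x0 = \<mu> *\<^sub>R x0 \<and>
           (\<forall>x. (U *v x) \<bullet> (U *v x) \<le> \<mu> * (x \<bullet> x))"
proof -
  define K where "K = transpose U ** U"
  define g where "g x = (U *v x) \<bullet> (U *v x)" for x :: "real^'n"
  have cont: "continuous_on (sphere 0 1) g" unfolding g_def by (intro continuous_intros)
  obtain v :: "real^'n" where "norm v = 1" using vector_choose_size[of 1] by auto
  then have "v \<in> sphere 0 1" by (simp only: mem_sphere_0)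
  then have ne: "sphere (0::real^'n) 1 \<noteq> {}" by blast
  obtain x0 where x0: "x0 \<in> sphere 0 1" and mx: "\<And>y. y \<in> sphere 0 1 \<Longrightarrow> g y \<le> g x0"
    using continuous_attains_sup[OF compact_sphere ne cont] by (meson)
  define \<mu> where "\<mu> = g x0"
  have gs: "g (c *\<^sub>R x) = c\<^sup>2 * g x" for c x
    unfolding g_def by (simp add: matrix_vector_mult_scaleR power2_eq_square)
  have bound: "g x \<le> \<mu> * (x \<bullet> x)" for x
  proof (cases "x = 0")
    case True then show ?thesis by (simp add: g_def)
  next
    case False
    define y where "y = (1 / norm x) *\<^sub>R x"
    have "y \<in> sphere 0 1" using False by (simp add: y_def)
    then have "g y \<le> \<mu>" using mx \<mu>_def by blast
    moreover have "x = norm x *\<^sub>R y" using False by (simp add: y_def)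
    then have "g x = (norm x)\<^sup>2 * g y" using gs by metis
    ultimately have "g x \<le> (norm x)\<^sup>2 * \<mu>" by (simp add: mult_left_mono)
    then show ?thesis by (simp add: power2_norm_eq_inner mult.commute)
  qed
  have x0n: "x0 \<bullet> x0 = 1" using x0 by (simp add: dot_square_norm)
  define z where "z = K *v x0 - \<mu> *\<^sub>R x0"
  have "z \<bullet> z = 0"
  proof (rule quad_zero)
    show "z \<bullet> z \<ge> 0" by simp
    fix t :: real assume "t > 0"
    have ineq: "g (x0 + t *\<^sub>R z) \<le> \<mu> * ((x0 + t *\<^sub>R z) \<bullet> (x0 + t *\<^sub>R z))" by (rule bound)
    have e1: "g (x0 + t *\<^sub>R z) = g x0 + 2 * t * ((U *v z) \<bullet> (U *v x0)) + t\<^sup>2 * g z"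
      unfolding g_def by (simp add: matrix_vector_right_distrib matrix_vector_mult_scaleR
          inner_add_left inner_add_right power2_eq_square) (simp add: inner_commute distrib_left)
    have e2: "(U *v z) \<bullet> (U *v x0) = z \<bullet> (K *v x0)" unfolding K_def dotK ..
    have e3: "(x0 + t *\<^sub>R z) \<bullet> (x0 + t *\<^sub>R z) = 1 + 2 * t * (z \<bullet> x0) + t\<^sup>2 * (z \<bullet> z)"
      using x0n by (simp add: inner_add_left inner_add_right power2_eq_square) (simp add: inner_commute distrib_left)
    have e4: "z \<bullet> (K *v x0) = z \<bullet> z + \<mu> * (z \<bullet> x0)"
      unfolding z_def by (simp add: inner_diff_left inner_diff_right inner_commute) (simp add: algebra_simps)
    have "\<mu> + 2 * t * (z \<bullet> z + \<mu> * (z \<bullet> x0)) + t\<^sup>2 * g z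
        \<le> \<mu> * (1 + 2 * t * (z \<bullet> x0) + t\<^sup>2 * (z \<bullet> z))"
      using ineq unfolding e1 e2 e4 e3 \<mu>_def[symmetric] .
    then show "2 * t * (z \<bullet> z) + t\<^sup>2 * (g z - \<mu> * (z \<bullet> z)) \<le> 0"
      by (simp add: algebra_simps)
  qed
  then have "z = 0" by simp
  then have "K *v x0 = \<mu> *\<^sub>R x0" unfolding z_def by simp
  moreover have "x0 \<noteq> 0" using x0 by auto
  ultimately show ?thesis
    by (intro exI[of _ \<mu>] exI[of _ x0]) (use bound in \<open>auto simp: K_def g_def\<close>)
qed
lemma lam_bound:
  fixes U :: "real^'n^'d"
  defines "K \<equiv> transpose U ** U"
  shows "largest_eigenvalue K \<ge> 0 \<and>
    (\<forall>x. (K *v x) \<bullet> (K *v x) \<le> largest_eigenvalue K * ((U *v x) \<bullet> (U *v x)))"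
proof -
  obtain \<mu> x0 where x0: "x0 \<noteq> 0" "K *v x0 = \<mu> *\<^sub>R x0"
    and bd: "\<And>x. (U *v x) \<bullet> (U *v x) \<le> \<mu> * (x \<bullet> x)"
    using top_eig[of U] unfolding K_def by blast
  have "\<mu> \<in> {c. \<exists>v. v \<noteq> 0 \<and> K *v v = c *\<^sub>R v}" using x0 by blast
  then have le: "\<mu> \<le> largest_eigenvalue K"
    unfolding largest_eigenvalue_def K_def using eig_finite[of U] by (intro Max_ge) auto
  have "0 \<le> \<mu> * (x0 \<bullet> x0)" using bd[of x0] by (meson inner_ge_zero order_trans)
  moreover have "x0 \<bullet> x0 > 0" using x0 by simp
  ultimately have mu0: "\<mu> \<ge> 0" by (simp add: zero_le_mult_iff)
  have "(K *v x) \<bullet> (K *v x) \<le> largest_eigenvalue K * ((U *v x) \<bullet> (U *v x))" for x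
  proof -
    define y where "y = K *v x"
    have "y \<bullet> y = (U *v y) \<bullet> (U *v x)" unfolding y_def K_def dotK ..
    also have "\<dots> \<le> norm (U *v y) * norm (U *v x)" by (rule norm_cauchy_schwarz)
    finally have "(y \<bullet> y)\<^sup>2 \<le> (norm (U *v y) * norm (U *v x))\<^sup>2"
      by (simp add: power_mono)
    also have "\<dots> = ((U *v y) \<bullet> (U *v y)) * ((U *v x) \<bullet> (U *v x))"
      by (simp add: power_mult_distrib dot_square_norm)
    also have "\<dots> \<le> (\<mu> * (y \<bullet> y)) * ((U *v x) \<bullet> (U *v x))"
      by (intro mult_right_mono bd) simp
    finally have h: "(y \<bullet> y) * (y \<bullet> y) \<le> (y \<bullet> y) * (\<mu> * ((U *v x) \<bullet> (U *v x)))"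
      by (simp add: power2_eq_square algebra_simps)
    have "y \<bullet> y \<le> \<mu> * ((U *v x) \<bullet> (U *v x))"
    proof (cases "y \<bullet> y = 0")
      case True then show ?thesis using mu0 by simp
    next
      case False then have "y \<bullet> y > 0" by (simp add: order_less_le)
      then show ?thesis using h by simp
    qed
    also have "\<dots> \<le> largest_eigenvalue K * ((U *v x) \<bullet> (U *v x))"
      by (intro mult_right_mono le) simp
    finally show ?thesis unfolding y_def .
  qed
  then show ?thesis using le mu0 by auto
qed

lemma l1_le: "(\<Sum>j\<in>UNIV. \<bar>v $ j\<bar>) \<le> sqrt (real CARD('n)) * norm (v :: real^'n)"
proof -
  define a :: "real^'n" where "a = (\<chi> j. \<bar>v $ j\<bar>)"
  define e :: "real^'n" where "e = (\<chi> j. 1)"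
  have "(\<Sum>j\<in>UNIV. \<bar>v $ j\<bar>) = a \<bullet> e" by (simp add: a_def e_def inner_vec_def)
  also have "\<dots> \<le> norm a * norm e" by (rule norm_cauchy_schwarz)
  also have "norm a = norm v"
    by (simp add: norm_eq_sqrt_inner inner_vec_def a_def)
  also have "norm e = sqrt (real CARD('n))"
    by (simp add: norm_eq_sqrt_inner inner_vec_def e_def)
  finally show ?thesis by (simp add: mult.commute)
qed

lemma sum_PiE_prod:
  fixes f :: "'n::finite \<Rightarrow> 'a \<Rightarrow> 'b::comm_semiring_1"
  assumes "finite S"
  shows
  "(\<Sum>\<gamma>\<in>PiE (UNIV :: 'n::finite set) (\<lambda>_. S). \<Prod>i\<in>UNIV. f i (\<gamma> i))
     = (\<Prod>i\<in>UNIV. \<Sum>g\<in>S. f i g)"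
  using prod_sum_PiE[of "UNIV :: 'n set" "\<lambda>_. S" f] assms by simp

lemma moment2:
  fixes j k :: "'n::finite"
  shows "(\<Sum>\<gamma>\<in>PiE (UNIV :: 'n set) (\<lambda>_. {-1, 0, 1 :: real}).
            (\<Prod>i\<in>UNIV. gamma_prob p (\<gamma> i)) * (\<gamma> j * \<gamma> k)) = (if j = k then 2 * p else 0)"
proof -
  define f where "f i g = gamma_prob p g * (if i = j then g else 1) * (if i = k then g else 1)"
    for i and g :: real
  have "(\<Prod>i\<in>UNIV. f i (\<gamma> i)) = (\<Prod>i\<in>UNIV. gamma_prob p (\<gamma> i)) * (\<gamma> j * \<gamma> k)" for \<gamma>
    unfolding f_def prod.distrib by simp
  then have "(\<Sum>\<gamma>\<in>PiE (UNIV :: 'n set) (\<lambda>_. {-1, 0, 1 :: real}).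
            (\<Prod>i\<in>UNIV. gamma_prob p (\<gamma> i)) * (\<gamma> j * \<gamma> k))
      = (\<Sum>\<gamma>\<in>PiE (UNIV :: 'n set) (\<lambda>_. {-1, 0, 1 :: real}). \<Prod>i\<in>UNIV. f i (\<gamma> i))"
    by simp
  also have "\<dots> = (\<Prod>i\<in>UNIV. \<Sum>g\<in>{-1, 0, 1 :: real}. f i g)"
    by (rule sum_PiE_prod) simp
  also have "(\<lambda>i. \<Sum>g\<in>{-1, 0, 1 :: real}. f i g) =
      (\<lambda>i. if i = j \<and> i = k then 2 * p else if i = j \<or> i = k then 0 else 1)"
    by (auto simp: f_def gamma_prob_def)
  also have "(\<Prod>i\<in>UNIV. if i = j \<and> i = k then 2 * p else if i = j \<or> i = k then 0 else 1)
     = (if j = k then 2 * p else 0)"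
  proof (cases "j = k")
    case True
    have "(\<Prod>i\<in>UNIV. if i = j \<and> i = k then 2 * p else if i = j \<or> i = k then 0 else (1::real))
       = (\<Prod>i\<in>UNIV. if i = k then 2 * p else 1)" using True by (intro prod.cong) auto
    then show ?thesis using True by simp
  next
    case False then show ?thesis by (intro trans[OF prod_zero]) auto
  qed
  finally show ?thesis .
qed

lemma total1:
  shows "(\<Sum>\<gamma>\<in>PiE (UNIV :: 'n::finite set) (\<lambda>_. {-1, 0, 1 :: real}).
            (\<Prod>i\<in>UNIV. gamma_prob p (\<gamma> i))) = 1"
proof -
  have "(\<Sum>\<gamma>\<in>PiE (UNIV :: 'n::finite set) (\<lambda>_. {-1, 0, 1 :: real}).
            (\<Prod>i\<in>UNIV. gamma_prob p (\<gamma> i))) = (\<Prod>i\<in>(UNIV::'n set). \<Sum>g\<in>{-1, 0, 1 :: real}. gamma_prob p g)"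
    by (rule sum_PiE_prod) simp
  also have "\<dots> = 1" by (simp add: gamma_prob_def)
  finally show ?thesis .
qed

lemma weighted_cs:
  fixes w a :: "'a \<Rightarrow> real"
  assumes "finite A" "\<And>x. x \<in> A \<Longrightarrow> w x \<ge> 0" "sum w A = 1"
  shows "(\<Sum>x\<in>A. w x * a x) \<le> sqrt (\<Sum>x\<in>A. w x * (a x)\<^sup>2)"
proof -
  define m where "m = (\<Sum>x\<in>A. w x * a x)"
  have "0 \<le> (\<Sum>x\<in>A. w x * (a x - m)\<^sup>2)" using assms by (intro sum_nonneg) auto
  also have "\<dots> = (\<Sum>x\<in>A. w x * (a x)\<^sup>2) - 2 * m * (\<Sum>x\<in>A. w x * a x) + m\<^sup>2 * sum w A"
    by (simp add: power2_eq_square algebra_simps sum.distrib sum_subtractf sum_distrib_left sum_distrib_right)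
  finally have "m\<^sup>2 \<le> (\<Sum>x\<in>A. w x * (a x)\<^sup>2)" using assms(3) by (simp add: m_def power2_eq_square)
  then show ?thesis unfolding m_def[symmetric] by (simp add: real_le_rsqrt)
qed

lemma elem_eq:
  fixes U :: "real^'n^'d" and \<beta> :: "real^'n"
  shows "(\<Sum>k\<in>UNIV. \<gamma> k * ((U *v \<beta>) \<bullet> column k U))
       = \<beta> \<bullet> ((transpose U ** U) *v (\<chi> k. \<gamma> k))"
proof -
  have "(\<Sum>k\<in>UNIV. \<gamma> k * ((U *v \<beta>) \<bullet> column k U)) = (U *v \<beta>) \<bullet> (U *v (\<chi> k. \<gamma> k))"
    unfolding inner_vec_def column_def matrix_vector_mult_def
    apply (simp add: sum_distrib_left sum_distrib_right mult_ac)
    apply (rule trans[OF sum.swap])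
    apply (rule sum.cong, rule refl)
    apply (rule trans[OF sum.swap])
    apply (simp add: mult_ac)
    done
  then show ?thesis by (simp add: dotK)
qed

lemma sup_bound:
  fixes U :: "real^'n^'d"
  assumes "C > 0"
  shows "(SUP h\<in>H_class U C. \<Sum>k\<in>UNIV. \<gamma> k * (h \<bullet> column k U))
     \<le> C * (\<Sum>j\<in>UNIV. \<bar>((transpose U ** U) *v (\<chi> k. \<gamma> k)) $ j\<bar>)"
proof (rule cSUP_least)
  show "H_class U C \<noteq> {}" unfolding H_class_def using assms
    by (auto intro!: exI[of _ "U *v 0"] exI[of _ 0])
next
  fix h assume "h \<in> H_class U C"
  then obtain \<beta> where h: "h = U *v \<beta>" and b: "\<And>k. \<bar>\<beta> $ k\<bar> \<le> C"
    unfolding H_class_def by blast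
  define v where "v = (transpose U ** U) *v (\<chi> k. \<gamma> k)"
  have "(\<Sum>k\<in>UNIV. \<gamma> k * (h \<bullet> column k U)) = \<beta> \<bullet> v"
    unfolding h v_def by (rule elem_eq)
  also have "\<dots> = (\<Sum>j\<in>UNIV. \<beta> $ j * v $ j)" by (simp add: inner_vec_def)
  also have "\<dots> \<le> (\<Sum>j\<in>UNIV. C * \<bar>v $ j\<bar>)"
  proof (rule sum_mono)
    fix j
    have "\<beta> $ j * v $ j \<le> \<bar>\<beta> $ j\<bar> * \<bar>v $ j\<bar>" by (metis abs_ge_self abs_mult)
    also have "\<dots> \<le> C * \<bar>v $ j\<bar>" by (intro mult_right_mono b) simp
    finally show "\<beta> $ j * v $ j \<le> C * \<bar>v $ j\<bar>" .
  qed
  finally show "(\<Sum>k\<in>UNIV. \<gamma> k * (h \<bullet> column k U)) \<le> C * (\<Sum>j\<in>UNIV. \<bar>v $ j\<bar>)"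
    by (simp add: sum_distrib_left)
qed

lemma quad_moment:
  fixes K :: "real^'n^'n"
  shows "(\<Sum>\<gamma>\<in>PiE (UNIV :: 'n set) (\<lambda>_. {-1, 0, 1 :: real}).
            (\<Prod>i\<in>UNIV. gamma_prob p (\<gamma> i)) * ((\<chi> k. \<gamma> k) \<bullet> (K *v (\<chi> k. \<gamma> k))))
       = 2 * p * (\<Sum>j\<in>UNIV. K $ j $ j)"
proof -
  let ?G = "PiE (UNIV :: 'n set) (\<lambda>_. {-1, 0, 1 :: real})"
  let ?w = "\<lambda>\<gamma>. \<Prod>i\<in>UNIV. gamma_prob p (\<gamma> i)"
  have "(\<Sum>\<gamma>\<in>?G. ?w \<gamma> * ((\<chi> k. \<gamma> k) \<bullet> (K *v (\<chi> k. \<gamma> k))))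
      = (\<Sum>\<gamma>\<in>?G. \<Sum>j\<in>UNIV. \<Sum>k\<in>UNIV. K $ j $ k * (?w \<gamma> * (\<gamma> j * \<gamma> k)))"
    by (simp add: inner_vec_def matrix_vector_mult_def sum_distrib_left mult_ac)
  also have "\<dots> = (\<Sum>j\<in>UNIV. \<Sum>\<gamma>\<in>?G. \<Sum>k\<in>UNIV. K $ j $ k * (?w \<gamma> * (\<gamma> j * \<gamma> k)))"
    by (rule sum.swap)
  also have "\<dots> = (\<Sum>j\<in>UNIV. \<Sum>k\<in>UNIV. \<Sum>\<gamma>\<in>?G. K $ j $ k * (?w \<gamma> * (\<gamma> j * \<gamma> k)))"
    by (rule sum.cong, rule refl, rule sum.swap)
  also have "\<dots> = (\<Sum>j\<in>UNIV. \<Sum>k\<in>UNIV. K $ j $ k * (if j = k then 2 * p else 0))"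
    by (simp add: sum_distrib_left[symmetric] moment2)
  also have "\<dots> = (\<Sum>j\<in>UNIV. K $ j $ j * (2 * p))"
    by (simp add: if_distrib cong: if_cong)
  finally show ?thesis by (simp add: sum_distrib_left mult_ac)
qed

theorem theorem2:
  fixes U :: "real^'n^'d" and C p :: real
  assumes norm1: "\<forall>k. (transpose U ** U) $ k $ k = 1"
    and C_pos: "C > 0"
    and p_pos: "0 < p" and p_le: "p \<le> 1/2"
  shows "trans_rademacher (H_class U C) U p
           \<le> C * sqrt (2 * p * largest_eigenvalue (transpose U ** U))"
proof -
  define K where "K = transpose U ** U"
  define L where "L = largest_eigenvalue K"
  define N where "N = real CARD('n)"
  let ?G = "PiE (UNIV :: 'n set) (\<lambda>_. {-1, 0, 1 :: real})"
  define w where "w \<gamma> = (\<Prod>i\<in>UNIV. gamma_prob p (\<gamma> i))" for \<gamma> :: "'n \<Rightarrow> real"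
  define gv where "gv \<gamma> = ((\<chi> k. \<gamma> k) :: real^'n)" for \<gamma> :: "'n \<Rightarrow> real"
  have L: "L \<ge> 0" "\<And>x. (K *v x) \<bullet> (K *v x) \<le> L * ((U *v x) \<bullet> (U *v x))"
    using lam_bound[of U] unfolding K_def L_def by auto
  have N: "N > 0" unfolding N_def by simp
  have w0: "w \<gamma> \<ge> 0" for \<gamma>
    unfolding w_def using p_pos p_le by (intro prod_nonneg) (simp add: gamma_prob_def)
  have w1: "sum w ?G = 1" unfolding w_def by (rule total1)
  have fin: "finite ?G" by (simp add: finite_PiE)
  have mono: "\<And>x y. x \<le> y \<Longrightarrow> C * sqrt N / N * sqrt x \<le> C * sqrt N / N * sqrt y"
    using C_pos N by (intro mult_left_mono) auto
  have "trans_rademacher (H_class U C) U p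
      = (1 / N) * (\<Sum>\<gamma>\<in>?G. w \<gamma> * (SUP h\<in>H_class U C. \<Sum>k\<in>UNIV. \<gamma> k * (h \<bullet> column k U)))"
    unfolding trans_rademacher_def N_def w_def ..
  also have "\<dots> \<le> (1 / N) * (\<Sum>\<gamma>\<in>?G. w \<gamma> * (C * sqrt N * norm (K *v gv \<gamma>)))"
  proof (rule mult_left_mono[OF sum_mono])
    fix \<gamma> assume "\<gamma> \<in> ?G"
    have "(SUP h\<in>H_class U C. \<Sum>k\<in>UNIV. \<gamma> k * (h \<bullet> column k U))
        \<le> C * (\<Sum>j\<in>UNIV. \<bar>(K *v gv \<gamma>) $ j\<bar>)"
      unfolding K_def gv_def by (rule sup_bound[OF C_pos])
    also have "\<dots> \<le> C * (sqrt N * norm (K *v gv \<gamma>))"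
      unfolding N_def using C_pos by (intro mult_left_mono l1_le) auto
    finally show "w \<gamma> * (SUP h\<in>H_class U C. \<Sum>k\<in>UNIV. \<gamma> k * (h \<bullet> column k U))
        \<le> w \<gamma> * (C * sqrt N * norm (K *v gv \<gamma>))"
      by (intro mult_left_mono w0) (simp add: mult_ac)
  qed (use N in auto)
  also have "\<dots> = (C * sqrt N / N) * (\<Sum>\<gamma>\<in>?G. w \<gamma> * norm (K *v gv \<gamma>))"
    by (simp add: sum_distrib_left mult_ac)
  also have "\<dots> \<le> (C * sqrt N / N) * sqrt (\<Sum>\<gamma>\<in>?G. w \<gamma> * (norm (K *v gv \<gamma>))\<^sup>2)"
    using C_pos N by (intro mult_left_mono weighted_cs[OF fin w0 w1]) auto
  also have "(\<Sum>\<gamma>\<in>?G. w \<gamma> * (norm (K *v gv \<gamma>))\<^sup>2) \<le> (\<Sum>\<gamma>\<in>?G. w \<gamma> * (L * (gv \<gamma> \<bullet> (K *v gv \<gamma>))))"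
  proof (intro sum_mono mult_left_mono w0)
    fix \<gamma>
    show "(norm (K *v gv \<gamma>))\<^sup>2 \<le> L * (gv \<gamma> \<bullet> (K *v gv \<gamma>))"
      using L(2)[of "gv \<gamma>"] dotK[of "gv \<gamma>" U "gv \<gamma>"] unfolding K_def[symmetric]
      by (simp add: power2_norm_eq_inner)
  qed
  also have "(\<Sum>\<gamma>\<in>?G. w \<gamma> * (L * (gv \<gamma> \<bullet> (K *v gv \<gamma>)))) = L * (2 * p * (\<Sum>j\<in>UNIV. K $ j $ j))"
    unfolding w_def gv_def quad_moment[symmetric] by (simp add: sum_distrib_left mult_ac)
  also have "(\<Sum>j\<in>UNIV. K $ j $ j) = N" using norm1 unfolding K_def N_def by simp
  finally have "trans_rademacher (H_class U C) U p \<le> C * sqrt N / N * sqrt (L * (2 * p * N))"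
    using mono by blast
  also have "\<dots> = C * sqrt (2 * p * L)"
    using N by (simp add: real_sqrt_mult field_simps)
  finally show ?thesis unfolding L_def K_def .
qed

end
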